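(* Let $m$ be a positive integer and let $\phi_1,\phi_2,\phi_3$ be pairwise distinct permutations of $\mathbb{F}_{2^m}$ such that $\psi=\phi_1+\phi_2+\phi_3$ is a permutation of $\mathbb{F}_{2^m}$ and $\psi^{-1}=\phi_1^{-1}+\phi_2^{-1}+\phi_3^{-1}$. Let $h_1,h_2,h_3:\mathbb{F}_{2^m}\to\mathbb{F}_2$ and define $f_j:\mathbb{F}_{2^m}\times\mathbb{F}_{2^m}\to\mathbb{F}_2$ by $f_j(x,y)=Tr(x\phi_j(y))+h_j(y)$ for $j=1,2,3$. Suppose that for all $x\in\mathbb{F}_{2^m}$, $$h_1(\phi_1^{-1}(x))+h_2(\phi_2^{-1}(x))+h_3(\phi_3^{-1}(x))+(h_1+h_2+h_3)(\psi^{-1}(x))=1.$$ Then $f_1,f_2,f_3$ and $f_4=f_1+f_2+f_3$ are bent and $f_1^*+f_2^*+f_3^*+f_4^*=1$ identically.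
   Context: $Tr$ denotes the absolute trace $\mathbb{F}_{2^m}\to\mathbb{F}_2$. A Boolean function $F:\mathbb{F}_{2^m}\times\mathbb{F}_{2^m}\to\mathbb{F}_2$ is bent if its Walsh transform $W_F(a,b)=\sum_{x,y}(-1)^{F(x,y)+Tr(ax+by)}$ satisfies $|W_F(a,b)|=2^m$ for all $(a,b)$; its dual $F^*$ is the Boolean function defined by $W_F(a,b)=2^m(-1)^{F^*(a,b)}$. *)

theory Defs
  imports Main "HOL-Library.Z2"
begin

text \<open>The finite field F_{2^m} is modelled by an arbitrary finite field type 'a of
characteristic 2 with CARD('a) = 2^m; F_2 is the type bit from HOL-Library.Z2.\<close>

definition field_trace :: "nat \<Rightarrow> 'a::field \<Rightarrow> 'a" where
  "field_trace m x = (\<Sum>i<m. x ^ (2 ^ i))"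

text \<open>Absolute trace F_{2^m} -> F_2 (its field value lies in {0,1}).\<close>
definition Tr :: "nat \<Rightarrow> 'a::field \<Rightarrow> bit" where
  "Tr m x = (if field_trace m x = 0 then 0 else 1)"

definition chi :: "bit \<Rightarrow> int" where
  "chi b = (if b = 0 then 1 else -1)"

definition walsh :: "nat \<Rightarrow> ('a::{field,finite} \<Rightarrow> 'a \<Rightarrow> bit) \<Rightarrow> 'a \<Rightarrow> 'a \<Rightarrow> int" where
  "walsh m F a b = (\<Sum>x\<in>UNIV. \<Sum>y\<in>UNIV. chi (F x y + Tr m (a * x + b * y)))"

definition bent :: "nat \<Rightarrow> ('a::{field,finite} \<Rightarrow> 'a \<Rightarrow> bit) \<Rightarrow> bool" where
  "bent m F \<longleftrightarrow> (\<forall>a b. \<bar>walsh m F a b\<bar> = 2 ^ m)"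

definition dual :: "nat \<Rightarrow> ('a::{field,finite} \<Rightarrow> 'a \<Rightarrow> bit) \<Rightarrow> 'a \<Rightarrow> 'a \<Rightarrow> bit" where
  "dual m F a b = (if walsh m F a b = 2 ^ m then 0 else 1)"

end

theory Submission imports Defs "HOL-Computational_Algebra.Polynomial" begin

declare add_bit_eq_xor [simp del] mult_bit_eq_and [simp del]

lemma bit_add_self [simp]: "(x::bit) + x = 0"
  by (cases x) simp_all

lemma chi_add: "chi (u + v) = chi u * chi v"
  by (cases u; cases v) (simp_all add: chi_def)

lemma sq_add2: assumes "(2::'a::field) = 0" shows "((x::'a) + y)^2 = x^2 + y^2"
proof -
  have "2*x*y = 0" using assms by simp
  then show ?thesis by (simp add: power2_sum)
qed

lemma pow2_add: assumes "(2::'a::field) = 0"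
  shows "((x::'a) + y)^(2^i) = x^(2^i) + y^(2^i)"
proof (induction i)
  case 0 then show ?case by simp
next
  case (Suc i)
  have e: "\<And>z::'a. z^(2^Suc i) = (z^(2^i))^2"
    by (simp add: power_mult[symmetric] mult.commute)
  show ?case unfolding e Suc using sq_add2[OF assms] by simp
qed

lemma sum_sq2: assumes "(2::'a::field) = 0"
  shows "(sum f A)^2 = sum (\<lambda>i. (f i :: 'a)^2) A"
proof (induction A rule: infinite_finite_induct)
  case (insert x F) then show ?case using sq_add2[OF assms] by simp
qed simp_all

lemma fermat_fin:
  fixes x :: "'a::{field,finite}"
  assumes "x \<noteq> 0"
  shows "x ^ (card (UNIV::'a set) - 1) = 1"
proof -
  let ?N = "UNIV - {0::'a}"
  have inj: "inj_on (\<lambda>y. x*y) ?N" using assms by (auto simp: inj_on_def)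
  have img: "(\<lambda>y. x*y) ` ?N = ?N"
  proof
    show "(\<lambda>y. x*y) ` ?N \<subseteq> ?N" using assms by auto
    show "?N \<subseteq> (\<lambda>y. x*y) ` ?N"
    proof
      fix z assume "z \<in> ?N"
      then have "z = x * (z / x)" "z / x \<in> ?N" using assms by auto
      then show "z \<in> (\<lambda>y. x*y) ` ?N" by blast
    qed
  qed
  have "prod id ?N = prod (\<lambda>y. x*y) ?N"
    using prod.reindex[OF inj, of id] img by simp
  also have "\<dots> = x ^ card ?N * prod id ?N"
    by (simp add: prod.distrib)
  finally have "x ^ card ?N * prod id ?N = 1 * prod id ?N" by simp
  moreover have "prod id ?N \<noteq> 0" by (simp add: prod_zero_iff)
  ultimately have "x ^ card ?N = 1" by (metis mult_right_cancel)
  moreover have "card ?N = card (UNIV::'a set) - 1"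
    by (simp add: card_Diff_singleton)
  ultimately show ?thesis by simp
qed

lemma pow_card:
  fixes x :: "'a::{field,finite}"
  shows "x ^ card (UNIV::'a set) = x"
proof (cases "x = 0")
  case True
  have "card (UNIV::'a set) > 0" by (simp add: card_gt_0_iff)
  then show ?thesis using True by simp
next
  case False
  obtain n where c: "card (UNIV::'a set) = Suc n"
    by (metis card_gt_0_iff finite_UNIV not0_implies_Suc UNIV_not_empty gr0_conv_Suc)
  have "x ^ n = 1" using fermat_fin[OF False] c by simp
  then show ?thesis by (simp add: c)
qed

lemma trace_add: assumes "(2::'a::field) = 0"
  shows "field_trace m ((x::'a) + y) = field_trace m x + field_trace m y"
  unfolding field_trace_def by (simp add: pow2_add[OF assms] sum.distrib)

lemma trace_sq:
  fixes x :: "'a::{field,finite}"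
  assumes c2: "(2::'a) = 0" and card: "card (UNIV::'a set) = 2^m"
  shows "(field_trace m x)^2 = field_trace m x"
proof -
  have e: "\<And>i. (x^(2^i))^2 = x^(2^Suc i)"
    by (simp add: power_mult[symmetric] mult.commute)
  have "(field_trace m x)^2 = (\<Sum>i<m. x^(2^Suc i))"
    unfolding field_trace_def sum_sq2[OF c2] e ..
  also have "\<dots> + x^(2^0) = (\<Sum>i<Suc m. x^(2^i))"
    by (simp only: sum.lessThan_Suc_shift) simp
  also have "\<dots> = field_trace m x + x^(2^m)"
    by (simp add: field_trace_def)
  also have "x^(2^m) = x^(2^0)" using pow_card[of x] card by simp
  finally show ?thesis by simp
qed

lemma trace01:
  fixes x :: "'a::{field,finite}"
  assumes c2: "(2::'a) = 0" and card: "card (UNIV::'a set) = 2^m"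
  shows "field_trace m x = 0 \<or> field_trace m x = 1"
proof -
  let ?t = "field_trace m x"
  have "?t * (?t - 1) = 0" using trace_sq[OF c2 card, of x]
    by (simp add: algebra_simps power2_eq_square)
  then show ?thesis by simp
qed

lemma Tr_add:
  fixes x :: "'a::{field,finite}"
  assumes c2: "(2::'a) = 0" and card: "card (UNIV::'a set) = 2^m"
  shows "Tr m (x + y) = Tr m x + Tr m y"
  using trace01[OF c2 card, of x] trace01[OF c2 card, of y] c2
  by (auto simp: Tr_def trace_add[OF c2])

lemma Tr_zero: "Tr m 0 = 0"
  by (simp add: Tr_def field_trace_def zero_power)

lemma Tr_nontriv:
  fixes x :: "'a::{field,finite}"
  assumes m: "0 < m" and card: "card (UNIV::'a set) = 2^m"
  shows "\<exists>d::'a. Tr m d = 1"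
proof (rule ccontr)
  assume "\<not> ?thesis"
  then have z: "\<And>d::'a. field_trace m d = 0" by (auto simp: Tr_def split: if_splits)
  define p :: "'a poly" where "p = (\<Sum>i<m. monom 1 (2^i))"
  have ev: "poly p d = field_trace m d" for d
    by (simp add: p_def poly_sum poly_monom field_trace_def)
  have dle: "degree p \<le> 2^(m-1)"
    unfolding p_def
    by (rule degree_sum_le) (auto intro: order_trans[OF degree_monom_le])
  have "coeff p (2^(m-1)) = (\<Sum>i<m. if i = m-1 then 1 else 0)"
    unfolding p_def coeff_sum coeff_monom by (rule sum.cong) auto
  also have "\<dots> = 1" using m by simp
  finally have "p \<noteq> 0" by auto
  then have "card {x. poly p x = 0} \<le> degree p" by (rule card_poly_roots_bound)
  also have "{x. poly p x = 0} = UNIV" using ev z by auto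
  finally have "2^m \<le> degree p" using card by simp
  then have "2^m \<le> (2::nat)^(m-1)" using dle by linarith
  moreover have "(2::nat)^(m-1) < 2^m" using m by (intro power_strict_increasing) auto
  ultimately show False by linarith
qed

lemma chi_add1: "chi (b + 1) = - chi b"
  by (cases b) (simp_all add: chi_def)

lemma char_sum:
  fixes c :: "'a::{field,finite}"
  assumes m: "0 < m" and c2: "(2::'a) = 0" and card: "card (UNIV::'a set) = 2^m"
  shows "(\<Sum>x\<in>UNIV. chi (Tr m (c*x))) = (if c = 0 then 2^m else 0)"
proof (cases "c = 0")
  case True
  then show ?thesis using card by (simp add: Tr_zero chi_def)
next
  case False
  have b1: "bij_betw (\<lambda>x. c*x) UNIV (UNIV::'a set)"
    by (rule bij_betw_byWitness[where f'="\<lambda>x. x/c"]) (use False in auto)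
  have r1: "(\<Sum>x\<in>UNIV. chi (Tr m (c*x))) = (\<Sum>x\<in>UNIV. chi (Tr m (x::'a)))"
    using sum.reindex_bij_betw[OF b1, of "\<lambda>x. chi (Tr m x)"] by simp
  obtain d :: 'a where d: "Tr m d = 1" using Tr_nontriv[OF m card] by blast
  have b2: "bij_betw (\<lambda>x. x + d) UNIV (UNIV::'a set)"
    by (rule bij_betw_byWitness[where f'="\<lambda>x. x - d"]) auto
  have "(\<Sum>x\<in>UNIV. chi (Tr m (x::'a))) = (\<Sum>x\<in>UNIV. chi (Tr m (x + d)))"
    using sum.reindex_bij_betw[OF b2, of "\<lambda>x. chi (Tr m x)"] by simp
  also have "\<dots> = - (\<Sum>x\<in>UNIV. chi (Tr m (x::'a)))"
    by (simp add: Tr_add[OF c2 card] d chi_add1 sum_negf)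
  finally have "(\<Sum>x\<in>UNIV. chi (Tr m (x::'a))) = 0" by simp
  then show ?thesis using False r1 by simp
qed

lemma walsh_form:
  fixes \<phi> :: "'a::{field,finite} \<Rightarrow> 'a" and h :: "'a \<Rightarrow> bit"
  assumes m: "0 < m" and c2: "(2::'a) = 0" and card: "card (UNIV::'a set) = 2^m"
    and bij: "bij \<phi>"
  shows "walsh m (\<lambda>x y. Tr m (x * \<phi> y) + h y) a b
         = 2^m * chi (h (inv \<phi> a) + Tr m (b * inv \<phi> a))"
proof -
  let ?g = "\<lambda>y. chi (h y + Tr m (b*y))"
  have pt: "Tr m (x * \<phi> y) + h y + Tr m (a*x + b*y) = (h y + Tr m (b*y)) + Tr m ((\<phi> y + a) * x)"
    for x y
  proof -
    have "Tr m ((\<phi> y + a) * x) = Tr m (x * \<phi> y) + Tr m (a * x)"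
      by (metis Tr_add[OF c2 card] distrib_right mult.commute)
    then show ?thesis by (simp add: Tr_add[OF c2 card] ac_simps)
  qed
  have eq: "(\<phi> y + a = 0) = (y = inv \<phi> a)" for y
  proof -
    have "a + a = 0" using c2 by (metis mult_2 mult_zero_left)
    then have "(\<phi> y + a = 0) = (\<phi> y = a)" by (metis add_right_cancel)
    then show ?thesis using bij_inv_eq_iff[OF bij] by metis
  qed
  have "walsh m (\<lambda>x y. Tr m (x * \<phi> y) + h y) a b
      = (\<Sum>x\<in>UNIV. \<Sum>y\<in>UNIV. ?g y * chi (Tr m ((\<phi> y + a) * x)))"
    unfolding walsh_def pt chi_add ..
  also have "\<dots> = (\<Sum>y\<in>UNIV. ?g y * (\<Sum>x\<in>UNIV. chi (Tr m ((\<phi> y + a) * x))))"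
    by (subst sum.swap) (simp add: sum_distrib_left)
  also have "\<dots> = (\<Sum>y\<in>UNIV. if y = inv \<phi> a then ?g y * 2^m else 0)"
    by (rule sum.cong) (simp_all add: char_sum[OF m c2 card] eq)
  also have "\<dots> = ?g (inv \<phi> a) * 2^m" by simp
  finally show ?thesis by simp
qed


lemma bent_dual_form:
  assumes "\<And>a b. walsh m F a b = 2^m * chi (S a b)"
  shows "bent m F" and "dual m F a b = S a b"
  using assms by (auto simp: bent_def dual_def chi_def)

lemma bit_cancel3:
  fixes A1 A2 A3 H T1 T2 T3 :: bit
  assumes "A1 + A2 + A3 + H = 1"
  shows "(A1 + T1) + (A2 + T2) + (A3 + T3) + (H + (T1 + T2 + T3)) = 1"
proof -
  have "(A1 + T1) + (A2 + T2) + (A3 + T3) + (H + (T1 + T2 + T3))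
     = (A1 + A2 + A3 + H) + (T1 + T1) + (T2 + T2) + (T3 + T3)"
    by (simp only: ac_simps)
  then show ?thesis using assms by simp
qed

theorem theorem7:
  fixes m :: nat
    and \<phi>1 \<phi>2 \<phi>3 :: "'a::{field,finite} \<Rightarrow> 'a"
    and h1 h2 h3 :: "'a \<Rightarrow> bit"
  assumes m_pos: "0 < m"
    and card: "card (UNIV :: 'a set) = 2 ^ m"
    and char2: "(2::'a) = 0"
    and bij1: "bij \<phi>1" and bij2: "bij \<phi>2" and bij3: "bij \<phi>3"
    and dist: "\<phi>1 \<noteq> \<phi>2" "\<phi>1 \<noteq> \<phi>3" "\<phi>2 \<noteq> \<phi>3"
    and psi_bij: "bij (\<lambda>x. \<phi>1 x + \<phi>2 x + \<phi>3 x)"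
    and psi_inv: "inv (\<lambda>x. \<phi>1 x + \<phi>2 x + \<phi>3 x) = (\<lambda>x. inv \<phi>1 x + inv \<phi>2 x + inv \<phi>3 x)"
    and hcond: "\<forall>x. h1 (inv \<phi>1 x) + h2 (inv \<phi>2 x) + h3 (inv \<phi>3 x)
                 + (h1 (inv (\<lambda>x. \<phi>1 x + \<phi>2 x + \<phi>3 x) x)
                    + h2 (inv (\<lambda>x. \<phi>1 x + \<phi>2 x + \<phi>3 x) x)
                    + h3 (inv (\<lambda>x. \<phi>1 x + \<phi>2 x + \<phi>3 x) x)) = 1"
  defines "f1 \<equiv> (\<lambda>x y. Tr m (x * \<phi>1 y) + h1 y)"
    and "f2 \<equiv> (\<lambda>x y. Tr m (x * \<phi>2 y) + h2 y)"
    and "f3 \<equiv> (\<lambda>x y. Tr m (x * \<phi>3 y) + h3 y)"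
    and "f4 \<equiv> (\<lambda>x y. (Tr m (x * \<phi>1 y) + h1 y) + (Tr m (x * \<phi>2 y) + h2 y) + (Tr m (x * \<phi>3 y) + h3 y))"
  shows "bent m f1 \<and> bent m f2 \<and> bent m f3 \<and> bent m f4 \<and>
         (\<forall>a b. dual m f1 a b + dual m f2 a b + dual m f3 a b + dual m f4 a b = 1)"
proof -
  let ?\<psi> = "\<lambda>x. \<phi>1 x + \<phi>2 x + \<phi>3 x"
  note TA = Tr_add[OF char2 card]
  have f4eq: "f4 = (\<lambda>x y. Tr m (x * ?\<psi> y) + (h1 y + h2 y + h3 y))"
  proof (intro ext)
    fix x y
    have "Tr m (x * ?\<psi> y) = Tr m (x * \<phi>1 y) + Tr m (x * \<phi>2 y) + Tr m (x * \<phi>3 y)"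
      by (simp add: distrib_left TA)
    then show "f4 x y = Tr m (x * ?\<psi> y) + (h1 y + h2 y + h3 y)"
      unfolding f4_def by (simp only: ac_simps)
  qed
  note W = walsh_form[OF m_pos char2 card]
  have W1: "\<And>a b. walsh m f1 a b = 2^m * chi (h1 (inv \<phi>1 a) + Tr m (b * inv \<phi>1 a))"
    unfolding f1_def by (rule W[OF bij1])
  have W2: "\<And>a b. walsh m f2 a b = 2^m * chi (h2 (inv \<phi>2 a) + Tr m (b * inv \<phi>2 a))"
    unfolding f2_def by (rule W[OF bij2])
  have W3: "\<And>a b. walsh m f3 a b = 2^m * chi (h3 (inv \<phi>3 a) + Tr m (b * inv \<phi>3 a))"
    unfolding f3_def by (rule W[OF bij3])
  have W4: "\<And>a b. walsh m f4 a b = 2^m * chi ((\<lambda>y. h1 y + h2 y + h3 y) (inv ?\<psi> a) + Tr m (b * inv ?\<psi> a))"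
    unfolding f4eq by (rule W[OF psi_bij])
  show ?thesis
  proof (intro conjI allI)
    show "bent m f1" by (rule bent_dual_form(1)[OF W1])
    show "bent m f2" by (rule bent_dual_form(1)[OF W2])
    show "bent m f3" by (rule bent_dual_form(1)[OF W3])
    show "bent m f4" by (rule bent_dual_form(1)[OF W4])
    fix a b
    have iv: "inv ?\<psi> a = inv \<phi>1 a + inv \<phi>2 a + inv \<phi>3 a"
      using psi_inv by (rule fun_cong)
    have tr: "Tr m (b * inv ?\<psi> a) = Tr m (b * inv \<phi>1 a) + Tr m (b * inv \<phi>2 a) + Tr m (b * inv \<phi>3 a)"
      unfolding iv by (simp add: distrib_left TA)
    have hc: "h1 (inv \<phi>1 a) + h2 (inv \<phi>2 a) + h3 (inv \<phi>3 a)
           + (h1 (inv ?\<psi> a) + h2 (inv ?\<psi> a) + h3 (inv ?\<psi> a)) = 1"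
      using hcond by blast
    show "dual m f1 a b + dual m f2 a b + dual m f3 a b + dual m f4 a b = 1"
      unfolding bent_dual_form(2)[OF W1] bent_dual_form(2)[OF W2]
        bent_dual_form(2)[OF W3] bent_dual_form(2)[OF W4] tr
      by (rule bit_cancel3[OF hc])
  qed
qed

end
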